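(* Let $Q_{\boldsymbol{X}}$ be a probability distribution on a covariate space $\mathcal{X}$ and let $L_2(Q_{\boldsymbol{X}})$ be the space of square-integrable measurable functions with respect to $Q_{\boldsymbol{X}}$. Suppose that the model class $\mathcal{F}\subset L_2(Q_{\boldsymbol{X}})$ is convex and contains all site-specific CATEs, i.e. $\tau^{(s)}\in\mathcal{F}$ for all $s\in\{1,\ldots,S\}$. Then the oracle minimax regret CATE \[ f_{\text{regret}}^*(\cdot)=\underset{f\in\mathcal{F}}{\arg\min}\ \max_{Q\in\mathcal{C}(Q_{\boldsymbol{X}})}\Big\{\mathbb{E}_Q\big[(Y(1)-Y(0)-f(\boldsymbol{X}))^2\big]-\min_{f'\in\mathcal{F}}\mathbb{E}_Q\big[(Y(1)-Y(0)-f'(\boldsymbol{X}))^2\big]\Big\} \] can be identified as \[ f_{\text{regret}}^*(\cdot)=\sum_{s=1}^S q_s^*\,\tau^{(s)}(\cdot)\quad\text{with}\quad \boldsymbol{q}^*=\underset{\boldsymbol{q}\in\Delta_{S-1}}{\arg\min}\ \boldsymbol{q}^\top\Gamma\boldsymbol{q}-\boldsymbol{q}^\top\boldsymbol{d}, \] where $\Gamma$ is the $S\times S$ matrix with entries $\Gamma_{k,l}=\mathbb{E}_{Q_{\boldsymbol{X}}}[\tau^{(k)}(\boldsymbol{X})\tau^{(l)}(\boldsymbol{X})]$ for $k,l\in\{1,\ldots,S\}$, and $\boldsymbol{d}=(\Gamma_{1,1},\ldots,\Gamma_{S,S})^\top$ is its diagonal vector.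
   Context: Setting: there are $S$ source sites; site $s$ has a joint distribution $P^{(s)}$ of binary-treatment potential outcomes $(Y(1),Y(0))$ (real-valued) and covariates $\boldsymbol{X}\in\mathcal{X}$, with site-specific conditional average treatment effect (CATE) $\tau^{(s)}(\boldsymbol{x})=\mathbb{E}_{P^{(s)}}[Y(1)-Y(0)\mid \boldsymbol{X}=\boldsymbol{x}]$. For a joint distribution $Q$ of $(Y(1),Y(0),\boldsymbol{X})$, $\tau_Q(\boldsymbol{x})=\mathbb{E}_Q[Y(1)-Y(0)\mid\boldsymbol{X}=\boldsymbol{x}]$. $\Delta_{S-1}=\{\boldsymbol{q}\in\mathbb{R}^S:\sum_s q_s=1,\ \min_s q_s\ge 0\}$. The multisite uncertainty set is $\mathcal{C}(Q_{\boldsymbol{X}})=\{Q=(Q_{\boldsymbol{X}},Q_{(Y(1),Y(0))\mid\boldsymbol{X}}):\ \tau_Q(\cdot)=\sum_{s=1}^S q_s\tau^{(s)}(\cdot)\text{ for some }\boldsymbol{q}\in\Delta_{S-1}\}$, i.e. all joint distributions with covariate marginal $Q_{\boldsymbol{X}}$ whose CATE is a convex combination of the site CATEs. *)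

theory Defs
  imports "HOL-Probability.Probability"
begin

text \<open>Joint distributions Q of (Y(1), Y(0), X) are measures on real \<times> real \<times> 'x.
  For an outcome w = (y1, y0, x): fst w = y1, fst (snd w) = y0, snd (snd w) = x.\<close>

definition prob_simplex :: "nat \<Rightarrow> (nat \<Rightarrow> real) set" where
  "prob_simplex S = {q. (\<forall>s\<in>{1..S}. 0 \<le> q s) \<and> (\<Sum>s=1..S. q s) = 1}"

definition in_L2 :: "'x measure \<Rightarrow> ('x \<Rightarrow> real) \<Rightarrow> bool" where
  "in_L2 QX f \<longleftrightarrow> f \<in> borel_measurable QX \<and> integrable QX (\<lambda>x. (f x)\<^sup>2)"

definition convex_fset :: "('x \<Rightarrow> real) set \<Rightarrow> bool" where
  "convex_fset F \<longleftrightarrow> (\<forall>f\<in>F. \<forall>g\<in>F. \<forall>t::real. 0 \<le> t \<and> t \<le> 1 \<longrightarrow>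
      (\<lambda>x. t * f x + (1 - t) * g x) \<in> F)"

text \<open>g is (a version of) the CATE x \<mapsto> E_Q[Y(1) - Y(0) | X = x]: the defining
  property of conditional expectation, with the covariate marginal QX.\<close>
definition is_cate :: "(real \<times> real \<times> 'x) measure \<Rightarrow> 'x measure \<Rightarrow> ('x \<Rightarrow> real) \<Rightarrow> bool" where
  "is_cate Q QX g \<longleftrightarrow> g \<in> borel_measurable QX \<and> integrable QX g \<and>
     integrable Q (\<lambda>w. fst w - fst (snd w)) \<and>
     (\<forall>A\<in>sets QX. (\<integral>w. indicator A (snd (snd w)) * (fst w - fst (snd w)) \<partial>Q)
                  = (\<integral>x. indicator A x * g x \<partial>QX))"

text \<open>The multisite uncertainty set C(QX) (restricted to Q with E_Q[(Y(1)-Y(0))^2] finite,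
  so that the squared-error risks are finite).\<close>
definition multisite_set ::
  "'x measure \<Rightarrow> nat \<Rightarrow> (nat \<Rightarrow> 'x \<Rightarrow> real) \<Rightarrow> (real \<times> real \<times> 'x) measure set" where
  "multisite_set QX S tau = {Q.
      sets Q = sets (borel \<Otimes>\<^sub>M (borel \<Otimes>\<^sub>M QX)) \<and> prob_space Q \<and>
      distr Q QX (\<lambda>w. snd (snd w)) = QX \<and>
      integrable Q (\<lambda>w. (fst w - fst (snd w))\<^sup>2) \<and>
      (\<exists>q\<in>prob_simplex S. is_cate Q QX (\<lambda>x. \<Sum>s=1..S. q s * tau s x))}"

definition risk :: "(real \<times> real \<times> 'x) measure \<Rightarrow> ('x \<Rightarrow> real) \<Rightarrow> real" where
  "risk Q f = (\<integral>w. (fst w - fst (snd w) - f (snd (snd w)))\<^sup>2 \<partial>Q)"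

definition regret ::
  "'x measure \<Rightarrow> nat \<Rightarrow> (nat \<Rightarrow> 'x \<Rightarrow> real) \<Rightarrow> ('x \<Rightarrow> real) set \<Rightarrow> ('x \<Rightarrow> real) \<Rightarrow> real" where
  "regret QX S tau F f =
     (SUP Q \<in> multisite_set QX S tau. risk Q f - (INF f' \<in> F. risk Q f'))"

definition Gamma :: "'x measure \<Rightarrow> (nat \<Rightarrow> 'x \<Rightarrow> real) \<Rightarrow> nat \<Rightarrow> nat \<Rightarrow> real" where
  "Gamma QX tau k l = (\<integral>x. tau k x * tau l x \<partial>QX)"

definition quad_obj :: "'x measure \<Rightarrow> nat \<Rightarrow> (nat \<Rightarrow> 'x \<Rightarrow> real) \<Rightarrow> (nat \<Rightarrow> real) \<Rightarrow> real" where
  "quad_obj QX S tau q =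
     (\<Sum>k=1..S. \<Sum>l=1..S. q k * Gamma QX tau k l * q l) - (\<Sum>k=1..S. q k * Gamma QX tau k k)"

end

theory Submission
  imports Defs
begin


lemma L2_prod_integrable:
  assumes "in_L2 M f" "in_L2 M g"
  shows "integrable M (\<lambda>x. f x * g x)"
proof -
  have i: "integrable M (\<lambda>x. (f x)\<^sup>2 + (g x)\<^sup>2)" using assms unfolding in_L2_def by auto
  have m: "(\<lambda>x. f x * g x) \<in> borel_measurable M" using assms unfolding in_L2_def by auto
  have "\<bar>f x * g x\<bar> \<le> (f x)\<^sup>2 + (g x)\<^sup>2" for x
  proof -
    have "2 * \<bar>f x\<bar> * \<bar>g x\<bar> \<le> \<bar>f x\<bar>\<^sup>2 + \<bar>g x\<bar>\<^sup>2" by (rule sum_squares_bound)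
    moreover have "\<bar>f x * g x\<bar> \<le> 2 * \<bar>f x\<bar> * \<bar>g x\<bar>" by (simp add: abs_mult)
    ultimately show ?thesis by simp
  qed
  then have "AE x in M. norm (f x * g x) \<le> norm ((f x)\<^sup>2 + (g x)\<^sup>2)" by auto
  then show ?thesis using Bochner_Integration.integrable_bound[OF i m] by blast
qed

lemma L2_add: "in_L2 M f \<Longrightarrow> in_L2 M g \<Longrightarrow> in_L2 M (\<lambda>x. f x + g x)"
proof -
  assume a: "in_L2 M f" "in_L2 M g"
  have "integrable M (\<lambda>x. (f x)\<^sup>2 + 2 * (f x * g x) + (g x)\<^sup>2)"
    using a L2_prod_integrable[OF a] unfolding in_L2_def by auto
  moreover have "(\<lambda>x. (f x + g x)\<^sup>2) = (\<lambda>x. (f x)\<^sup>2 + 2 * (f x * g x) + (g x)\<^sup>2)"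
    by (simp add: fun_eq_iff power2_sum)
  ultimately show ?thesis using a unfolding in_L2_def by (simp add: borel_measurable_add)
qed

lemma L2_cmult: "in_L2 M f \<Longrightarrow> in_L2 M (\<lambda>x. c * f x)"
  unfolding in_L2_def by (simp add: power_mult_distrib borel_measurable_times)

lemma L2_diff: "in_L2 M f \<Longrightarrow> in_L2 M g \<Longrightarrow> in_L2 M (\<lambda>x. f x - g x)"
  using L2_add[of M f "\<lambda>x. (-1) * g x"] L2_cmult[of M g "-1"] by simp

lemma L2_zero: "in_L2 M (\<lambda>x. 0)" unfolding in_L2_def by simp

lemma L2_sum: "finite I \<Longrightarrow> (\<And>i. i \<in> I \<Longrightarrow> in_L2 M (f i)) \<Longrightarrow> in_L2 M (\<lambda>x. \<Sum>i\<in>I. f i x)"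
proof (induction I rule: finite_induct)
  case empty then show ?case by (simp add: L2_zero)
next
  case (insert a I)
  then show ?case using L2_add[of M "f a" "\<lambda>x. \<Sum>i\<in>I. f i x"] by simp
qed

lemma L2_const: "finite_measure M \<Longrightarrow> in_L2 M (\<lambda>x. c)"
  unfolding in_L2_def by (simp add: finite_measure.integrable_const)

lemma L2_integrable: "finite_measure M \<Longrightarrow> in_L2 M f \<Longrightarrow> integrable M f"
  using L2_prod_integrable[of M f "\<lambda>x. 1"] L2_const[of M 1] by simp

lemma L2_sq_integrable: "in_L2 M f \<Longrightarrow> integrable M (\<lambda>x. (f x)\<^sup>2)"
  unfolding in_L2_def by simp



lemma pw_E:
  fixes q v :: "nat \<Rightarrow> real"
  shows "(\<Sum>s\<in>I. q s * (a - v s)\<^sup>2) = (\<Sum>s\<in>I. q s * (v s)\<^sup>2) - 2 * a * (\<Sum>s\<in>I. q s * v s) + a\<^sup>2 * (\<Sum>s\<in>I. q s)"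
proof -
  have "(\<Sum>s\<in>I. q s * (a - v s)\<^sup>2) = (\<Sum>s\<in>I. q s * (v s)\<^sup>2 - 2 * a * (q s * v s) + a\<^sup>2 * q s)"
    by (rule sum.cong) (auto simp: power2_diff algebra_simps)
  also have "\<dots> = (\<Sum>s\<in>I. q s * (v s)\<^sup>2) - 2 * a * (\<Sum>s\<in>I. q s * v s) + a\<^sup>2 * (\<Sum>s\<in>I. q s)"
    by (simp add: sum.distrib sum_subtractf sum_distrib_left)
  finally show ?thesis .
qed

lemma pw_BV:
  fixes q v :: "nat \<Rightarrow> real"
  assumes "(\<Sum>s\<in>I. q s) = 1"
  shows "(\<Sum>s\<in>I. q s * (a - v s)\<^sup>2) = (a - (\<Sum>s\<in>I. q s * v s))\<^sup>2 + (\<Sum>s\<in>I. q s * (v s - (\<Sum>s\<in>I. q s * v s))\<^sup>2)"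
proof -
  have e: "(\<Sum>s\<in>I. q s * (v s - m)\<^sup>2) = (\<Sum>s\<in>I. q s * (m - v s)\<^sup>2)" for m
    by (rule sum.cong) (auto simp: power2_commute)
  show ?thesis unfolding e pw_E assms by (simp add: power2_eq_square algebra_simps)
qed

lemma pw_W:
  fixes q v :: "nat \<Rightarrow> real"
  assumes "(\<Sum>s\<in>I. q s) = 1"
  shows "(\<Sum>s\<in>I. q s * (v s - (\<Sum>s\<in>I. q s * v s))\<^sup>2) = (\<Sum>s\<in>I. q s * (v s)\<^sup>2) - (\<Sum>s\<in>I. q s * v s)\<^sup>2"
proof -
  have e: "(\<Sum>s\<in>I. q s * (v s - m)\<^sup>2) = (\<Sum>s\<in>I. q s * (m - v s)\<^sup>2)" for m
    by (rule sum.cong) (auto simp: power2_commute)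
  show ?thesis unfolding e pw_E assms by (simp add: power2_eq_square algebra_simps)
qed

lemma pw_sq:
  fixes q v :: "nat \<Rightarrow> real"
  shows "(\<Sum>s\<in>I. q s * v s)\<^sup>2 = (\<Sum>k\<in>I. \<Sum>l\<in>I. q k * (v k * v l) * q l)"
  by (simp add: power2_eq_square sum_product algebra_simps)

lemma pw_lin:
  fixes q phi :: "nat \<Rightarrow> real"
  assumes "finite I" "s \<in> I"
  shows "(\<Sum>r\<in>I. ((1 - t) * q r + t * (if r = s then 1 else 0)) * phi r) = (1 - t) * (\<Sum>r\<in>I. q r * phi r) + t * phi s"
proof -
  have "(\<Sum>r\<in>I. ((1 - t) * q r + t * (if r = s then 1 else 0)) * phi r) = (\<Sum>r\<in>I. (1 - t) * (q r * phi r) + (if r = s then t * phi s else 0))"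
    by (rule sum.cong) (auto simp: algebra_simps)
  also have "\<dots> = (1 - t) * (\<Sum>r\<in>I. q r * phi r) + t * phi s"
    using assms by (simp add: sum.distrib sum_distrib_left)
  finally show ?thesis .
qed

lemma pw_Wt:
  fixes q v :: "nat \<Rightarrow> real" and t :: real
  assumes "finite I" "s \<in> I" "(\<Sum>s\<in>I. q s) = 1"
  defines "qt \<equiv> (\<lambda>r. (1 - t) * q r + t * (if r = s then 1 else 0))"
  defines "m \<equiv> (\<Sum>s\<in>I. q s * v s)"
  defines "W \<equiv> (\<Sum>r\<in>I. q r * (v r - m)\<^sup>2)"
  shows "(\<Sum>r\<in>I. qt r * (v r - (\<Sum>s\<in>I. qt s * v s))\<^sup>2) = W + t * ((v s - m)\<^sup>2 - W) - t\<^sup>2 * (v s - m)\<^sup>2"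
proof -
  have s1: "(\<Sum>s\<in>I. qt s) = 1"
    using pw_lin[OF assms(1,2), of t q "\<lambda>_. 1"] assms(3) unfolding qt_def by simp
  have l1: "(\<Sum>s\<in>I. qt s * v s) = (1 - t) * m + t * v s"
    using pw_lin[OF assms(1,2), of t q v] unfolding qt_def m_def by simp
  have l2: "(\<Sum>s\<in>I. qt s * (v s)\<^sup>2) = (1 - t) * (\<Sum>s\<in>I. q s * (v s)\<^sup>2) + t * (v s)\<^sup>2"
    using pw_lin[OF assms(1,2), of t q "\<lambda>r. (v r)\<^sup>2"] unfolding qt_def by simp
  have W: "W = (\<Sum>s\<in>I. q s * (v s)\<^sup>2) - m\<^sup>2"
    unfolding W_def m_def by (rule pw_W[OF assms(3)])
  have "(\<Sum>r\<in>I. qt r * (v r - (\<Sum>s\<in>I. qt s * v s))\<^sup>2) = (\<Sum>s\<in>I. qt s * (v s)\<^sup>2) - (\<Sum>s\<in>I. qt s * v s)\<^sup>2"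
    by (rule pw_W[OF s1])
  also have "\<dots> = (1 - t) * (\<Sum>s\<in>I. q s * (v s)\<^sup>2) + t * (v s)\<^sup>2 - ((1 - t) * m + t * v s)\<^sup>2"
    unfolding l1 l2 ..
  also have "\<dots> = W + t * ((v s - m)\<^sup>2 - W) - t\<^sup>2 * (v s - m)\<^sup>2"
    unfolding W by (simp add: power2_eq_square algebra_simps)
  finally show ?thesis .
qed



lemma convex_comb_in:
  fixes n :: nat and q :: "nat \<Rightarrow> real" and tau :: "nat \<Rightarrow> 'x \<Rightarrow> real"
  assumes cv: "convex_fset F"
  shows "(\<forall>s\<in>{1..n}. tau s \<in> F) \<Longrightarrow> (\<forall>s\<in>{1..n}. 0 \<le> q s) \<Longrightarrow> (\<Sum>s=1..n. q s) = (1::real)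
     \<Longrightarrow> (\<lambda>x. \<Sum>s=1..n. q s * tau s x) \<in> F"
proof (induction n arbitrary: q)
  note key = cv[unfolded convex_fset_def, rule_format]
  case 0 then show ?case by simp
next
  case (Suc n)
  note key = cv[unfolded convex_fset_def, rule_format]
  define a where "a = q (Suc n)"
  have sn: "(\<Sum>s=1..n. q s) = 1 - a" using Suc.prems(3) unfolding a_def by simp
  have nn: "\<forall>s\<in>{1..n}. 0 \<le> q s" using Suc.prems(2) by auto
  have a0: "0 \<le> a" using Suc.prems(2) unfolding a_def by auto
  have "0 \<le> (\<Sum>s=1..n. q s)" using nn by (intro sum_nonneg) auto
  then have a1: "a \<le> 1" using sn by simp
  have tS: "tau (Suc n) \<in> F" using Suc.prems(1) by auto
  have expand: "(\<lambda>x. \<Sum>s=1..Suc n. q s * tau s x) = (\<lambda>x. (\<Sum>s=1..n. q s * tau s x) + a * tau (Suc n) x)"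
    unfolding a_def by simp
  show ?case
  proof (cases "a = 1")
    case True
    then have "(\<Sum>s=1..n. q s) = 0" using sn by simp
    then have "\<forall>s\<in>{1..n}. q s = 0" using nn sum_nonneg_eq_0_iff[of "{1..n}" q] by auto
    then have "(\<lambda>x. \<Sum>s=1..Suc n. q s * tau s x) = tau (Suc n)"
      unfolding expand using True by (simp add: fun_eq_iff)
    then show ?thesis using tS by simp
  next
    case False
    then have a1': "a < 1" using a1 by simp
    define p where "p s = q s / (1 - a)" for s
    have "(\<Sum>s=1..n. p s) = 1" unfolding p_def using sn a1' by (simp add: sum_divide_distrib[symmetric])
    moreover have "\<forall>s\<in>{1..n}. 0 \<le> p s" unfolding p_def using nn a1' by simp
    moreover have "\<forall>s\<in>{1..n}. tau s \<in> F" using Suc.prems(1) by auto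
    ultimately have pin: "(\<lambda>x. \<Sum>s=1..n. p s * tau s x) \<in> F" using Suc.IH by blast
    have "(\<lambda>x. (1 - a) * (\<Sum>s=1..n. p s * tau s x) + (1 - (1 - a)) * tau (Suc n) x) \<in> F"
      by (rule key[OF pin tS]) (use a0 a1 in auto)
    moreover have "(\<lambda>x. (1 - a) * (\<Sum>s=1..n. p s * tau s x) + (1 - (1 - a)) * tau (Suc n) x)
        = (\<lambda>x. \<Sum>s=1..Suc n. q s * tau s x)"
      unfolding expand p_def using a1' by (simp add: sum_distrib_left fun_eq_iff)
    ultimately show ?thesis by simp
  qed
qed



lemma cate_inner:
  fixes Q :: "(real \<times> real \<times> 'x) measure" and QX :: "'x measure"
  assumes sQ: "sets Q = sets (borel \<Otimes>\<^sub>M (borel \<Otimes>\<^sub>M QX))" and P: "prob_space Q"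
    and d: "distr Q QX (\<lambda>w. snd (snd w)) = QX"
    and Y2: "integrable Q (\<lambda>w. (fst w - fst (snd w))\<^sup>2)"
    and c: "is_cate Q QX g" and h: "in_L2 QX h"
  shows "(\<integral>w. (fst w - fst (snd w)) * h (snd (snd w)) \<partial>Q) = (\<integral>x. g x * h x \<partial>QX)"
proof -
  interpret prob_space Q by (rule P)
  define X where "X = (\<lambda>w::real \<times> real \<times> 'x. snd (snd w))"
  define Y where "Y = (\<lambda>w::real \<times> real \<times> 'x. fst w - fst (snd w))"
  have dX: "distr Q QX X = QX" using d unfolding X_def .
  have "X \<in> measurable (borel \<Otimes>\<^sub>M (borel \<Otimes>\<^sub>M QX)) QX" unfolding X_def by measurable
  then have Xm: "X \<in> measurable Q QX" using measurable_cong_sets[OF sQ refl] by blast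
  have "Y \<in> borel_measurable (borel \<Otimes>\<^sub>M (borel \<Otimes>\<^sub>M QX))" unfolding Y_def by measurable
  then have Ym: "Y \<in> borel_measurable Q" using measurable_cong_sets[OF sQ refl] by blast
  have gm: "g \<in> borel_measurable QX" and gi: "integrable QX g" and Yi: "integrable Q Y"
    and cA: "\<And>A. A \<in> sets QX \<Longrightarrow> (\<integral>w. indicator A (X w) * Y w \<partial>Q) = (\<integral>x. indicator A x * g x \<partial>QX)"
    using c unfolding is_cate_def X_def Y_def by auto
  have hm: "h \<in> borel_measurable QX" using h unfolding in_L2_def by auto
  define Fa where "Fa = vimage_algebra (space Q) X QX"
  have Xsp: "X \<in> space Q \<rightarrow> space QX" using measurable_space[OF Xm] by blast
  have XF: "X \<in> measurable Fa QX" unfolding Fa_def by (rule measurable_vimage_algebra1[OF Xsp])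
  have sub: "subalgebra Q Fa" unfolding subalgebra_def Fa_def
    using sets_image_in_sets[OF refl Xm] by simp
  interpret finite_measure_subalgebra Q Fa
    by unfold_locales (rule sub)
  have gXF: "(\<lambda>w. g (X w)) \<in> borel_measurable Fa" using measurable_compose[OF XF gm] .
  have gXm: "(\<lambda>w. g (X w)) \<in> borel_measurable Q" using measurable_compose[OF Xm gm] .
  have hXF: "(\<lambda>w. h (X w)) \<in> borel_measurable Fa" using measurable_compose[OF XF hm] .
  have hXm: "(\<lambda>w. h (X w)) \<in> borel_measurable Q" using measurable_compose[OF Xm hm] .
  have gXi: "integrable Q (\<lambda>w. g (X w))"
    using integrable_distr_eq[OF Xm gm] gi dX by simp
  have intd: "\<And>f::'x \<Rightarrow> real. f \<in> borel_measurable QX \<Longrightarrow> (\<integral>x. f x \<partial>QX) = (\<integral>w. f (X w) \<partial>Q)"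
  proof -
    fix f :: "'x \<Rightarrow> real" assume fm: "f \<in> borel_measurable QX"
    have "(\<integral>x. f x \<partial>QX) = (\<integral>x. f x \<partial>(distr Q QX X))" using d unfolding X_def by simp
    also have "\<dots> = (\<integral>w. f (X w) \<partial>Q)" by (rule integral_distr[OF Xm fm])
    finally show "(\<integral>x. f x \<partial>QX) = (\<integral>w. f (X w) \<partial>Q)" .
  qed
  have AEc: "AE w in Q. real_cond_exp Q Fa Y w = g (X w)"
  proof (rule real_cond_exp_charact[OF _ Yi gXi gXF])
    fix A assume A: "A \<in> sets Fa"
    then obtain B where B: "B \<in> sets QX" and AB: "A = X -` B \<inter> space Q"
      unfolding Fa_def sets_vimage_algebra2[OF Xsp] by auto
    have "(\<integral>w \<in> A. Y w \<partial>Q) = (\<integral>w. indicator B (X w) * Y w \<partial>Q)"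
      unfolding set_lebesgue_integral_def AB
      by (rule Bochner_Integration.integral_cong) (auto simp: indicator_def)
    also have "\<dots> = (\<integral>x. indicator B x * g x \<partial>QX)" by (rule cA[OF B])
    also have "\<dots> = (\<integral>w. indicator B (X w) * g (X w) \<partial>Q)"
      by (rule intd) (use B gm in measurable)
    also have "\<dots> = (\<integral>w \<in> A. g (X w) \<partial>Q)"
      unfolding set_lebesgue_integral_def AB
      by (rule Bochner_Integration.integral_cong) (auto simp: indicator_def)
    finally show "(\<integral>w \<in> A. Y w \<partial>Q) = (\<integral>w \<in> A. g (X w) \<partial>Q)" .
  qed
  have YL2: "in_L2 Q Y" using Ym Y2 unfolding in_L2_def Y_def by simp
  have "integrable Q (\<lambda>w. (h (X w))\<^sup>2)"
    using integrable_distr_eq[OF Xm, of "\<lambda>x. (h x)\<^sup>2"] h dX hm unfolding in_L2_def by simp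
  then have hL2: "in_L2 Q (\<lambda>w. h (X w))" using hXm unfolding in_L2_def by simp
  have iYh: "integrable Q (\<lambda>w. h (X w) * Y w)" using L2_prod_integrable[OF hL2 YL2] .
  have "(\<integral>w. h (X w) * Y w \<partial>Q) = (\<integral>w. h (X w) * real_cond_exp Q Fa Y w \<partial>Q)"
    using real_cond_exp_intg(2)[OF iYh hXF Ym] by simp
  also have "\<dots> = (\<integral>w. h (X w) * g (X w) \<partial>Q)"
    by (rule integral_cong_AE) (use AEc hXm gXm in auto)
  also have "\<dots> = (\<integral>x. h x * g x \<partial>QX)"
    by (rule intd[symmetric]) (use hm gm in measurable)
  finally show ?thesis unfolding X_def Y_def by (simp add: mult.commute)
qed



lemma pull_integral:
  fixes Q :: "(real \<times> real \<times> 'x) measure" and QX :: "'x measure" and f :: "'x \<Rightarrow> real"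
  assumes sQ: "sets Q = sets (borel \<Otimes>\<^sub>M (borel \<Otimes>\<^sub>M QX))"
    and d: "distr Q QX (\<lambda>w. snd (snd w)) = QX" and fm: "f \<in> borel_measurable QX"
  shows "(\<integral>x. f x \<partial>QX) = (\<integral>w. f (snd (snd w)) \<partial>Q)"
    and "integrable QX f \<longleftrightarrow> integrable Q (\<lambda>w. f (snd (snd w)))"
    and "(\<lambda>w. f (snd (snd w))) \<in> borel_measurable Q"
proof -
  have "(\<lambda>w. snd (snd w)) \<in> measurable (borel \<Otimes>\<^sub>M (borel \<Otimes>\<^sub>M QX)) QX" by measurable
  then have Xm: "(\<lambda>w. snd (snd w)) \<in> measurable Q QX" using measurable_cong_sets[OF sQ refl] by blast
  show "(\<integral>x. f x \<partial>QX) = (\<integral>w. f (snd (snd w)) \<partial>Q)"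
    using integral_distr[OF Xm fm] d by simp
  show "integrable QX f \<longleftrightarrow> integrable Q (\<lambda>w. f (snd (snd w)))"
    using integrable_distr_eq[OF Xm fm] d by simp
  show "(\<lambda>w. f (snd (snd w))) \<in> borel_measurable Q" using measurable_compose[OF Xm fm] .
qed

lemma pull_L2:
  fixes Q :: "(real \<times> real \<times> 'x) measure" and QX :: "'x measure" and f :: "'x \<Rightarrow> real"
  assumes sQ: "sets Q = sets (borel \<Otimes>\<^sub>M (borel \<Otimes>\<^sub>M QX))"
    and d: "distr Q QX (\<lambda>w. snd (snd w)) = QX" and f: "in_L2 QX f"
  shows "in_L2 Q (\<lambda>w. f (snd (snd w)))"
proof -
  have fm: "f \<in> borel_measurable QX" using f unfolding in_L2_def by simp
  have "(\<lambda>x. (f x)\<^sup>2) \<in> borel_measurable QX" using fm by measurable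
  then show ?thesis using pull_integral[OF sQ d fm] pull_integral[OF sQ d, of "\<lambda>x. (f x)\<^sup>2"] f
    unfolding in_L2_def by simp
qed

lemma risk_formula:
  fixes Q :: "(real \<times> real \<times> 'x) measure" and QX :: "'x measure"
  assumes sQ: "sets Q = sets (borel \<Otimes>\<^sub>M (borel \<Otimes>\<^sub>M QX))" and P: "prob_space Q"
    and d: "distr Q QX (\<lambda>w. snd (snd w)) = QX"
    and Y2: "integrable Q (\<lambda>w. (fst w - fst (snd w))\<^sup>2)"
    and c: "is_cate Q QX g" and g: "in_L2 QX g" and f: "in_L2 QX f"
  shows "risk Q f = (\<integral>w. (fst w - fst (snd w))\<^sup>2 \<partial>Q) - (\<integral>x. (g x)\<^sup>2 \<partial>QX) + (\<integral>x. (f x - g x)\<^sup>2 \<partial>QX)"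
proof -
  define Y where "Y = (\<lambda>w::real \<times> real \<times> 'x. fst w - fst (snd w))"
  have "Y \<in> borel_measurable (borel \<Otimes>\<^sub>M (borel \<Otimes>\<^sub>M QX))" unfolding Y_def by measurable
  then have Ym: "Y \<in> borel_measurable Q" using measurable_cong_sets[OF sQ refl] by blast
  have YL2: "in_L2 Q Y" using Ym Y2 unfolding in_L2_def Y_def by simp
  have fL2: "in_L2 Q (\<lambda>w. f (snd (snd w)))" by (rule pull_L2[OF sQ d f])
  have i1: "integrable Q (\<lambda>w. Y w * f (snd (snd w)))" by (rule L2_prod_integrable[OF YL2 fL2])
  have i2: "integrable Q (\<lambda>w. (f (snd (snd w)))\<^sup>2)" using fL2 unfolding in_L2_def by simp
  have i3: "integrable Q (\<lambda>w. (Y w)\<^sup>2)" using YL2 unfolding in_L2_def by simp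
  have fm: "f \<in> borel_measurable QX" using f unfolding in_L2_def by simp
  have f2m: "(\<lambda>x. (f x)\<^sup>2) \<in> borel_measurable QX" using fm by measurable
  have "risk Q f = (\<integral>w. (Y w)\<^sup>2 - 2 * (Y w * f (snd (snd w))) + (f (snd (snd w)))\<^sup>2 \<partial>Q)"
    unfolding risk_def Y_def by (rule Bochner_Integration.integral_cong) (auto simp: power2_diff)
  also have "\<dots> = (\<integral>w. (Y w)\<^sup>2 \<partial>Q) - 2 * (\<integral>w. Y w * f (snd (snd w)) \<partial>Q) + (\<integral>w. (f (snd (snd w)))\<^sup>2 \<partial>Q)"
    using i1 i2 i3 by simp
  also have "(\<integral>w. Y w * f (snd (snd w)) \<partial>Q) = (\<integral>x. g x * f x \<partial>QX)"
    unfolding Y_def by (rule cate_inner[OF sQ P d Y2 c f])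
  also have "(\<integral>w. (f (snd (snd w)))\<^sup>2 \<partial>Q) = (\<integral>x. (f x)\<^sup>2 \<partial>QX)"
    using pull_integral(1)[OF sQ d f2m] by simp
  finally have R: "risk Q f = (\<integral>w. (Y w)\<^sup>2 \<partial>Q) - 2 * (\<integral>x. g x * f x \<partial>QX) + (\<integral>x. (f x)\<^sup>2 \<partial>QX)" .
  have "(\<integral>x. (f x - g x)\<^sup>2 \<partial>QX) = (\<integral>x. (f x)\<^sup>2 - 2 * (g x * f x) + (g x)\<^sup>2 \<partial>QX)"
    by (rule Bochner_Integration.integral_cong) (auto simp: power2_diff algebra_simps)
  also have "\<dots> = (\<integral>x. (f x)\<^sup>2 \<partial>QX) - 2 * (\<integral>x. g x * f x \<partial>QX) + (\<integral>x. (g x)\<^sup>2 \<partial>QX)"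
    using L2_prod_integrable[OF g f] g f unfolding in_L2_def by simp
  finally show ?thesis using R unfolding Y_def by simp
qed



locale msetting =
  fixes QX :: "'x measure" and S :: nat and tau :: "nat \<Rightarrow> 'x \<Rightarrow> real" and F :: "('x \<Rightarrow> real) set"
  assumes QX: "prob_space QX" and FL2: "\<forall>f\<in>F. in_L2 QX f" and cvx: "convex_fset F"
    and tauF: "\<forall>s\<in>{1..S}. tau s \<in> F"
begin

definition tq :: "(nat \<Rightarrow> real) \<Rightarrow> 'x \<Rightarrow> real" where
  "tq q = (\<lambda>x. \<Sum>s=1..S. q s * tau s x)"

definition ev :: "nat \<Rightarrow> nat \<Rightarrow> real" where
  "ev s = (\<lambda>r. if r = s then 1 else 0)"

lemma fin_meas: "finite_measure QX"
  using QX unfolding prob_space_def by simp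

lemma tau_L2: "s \<in> {1..S} \<Longrightarrow> in_L2 QX (tau s)"
  using tauF FL2 by auto

lemma tau_cmult: "s \<in> {1..S} \<Longrightarrow> in_L2 QX (\<lambda>x. c * tau s x)"
  using L2_cmult[OF tau_L2] by blast

lemma tq_L2: "in_L2 QX (tq q)"
  unfolding tq_def by (rule L2_sum) (simp_all add: tau_cmult)

lemma tq_F: "q \<in> prob_simplex S \<Longrightarrow> tq q \<in> F"
  unfolding tq_def prob_simplex_def using convex_comb_in[OF cvx] tauF by auto

lemma ev_simplex: "s \<in> {1..S} \<Longrightarrow> ev s \<in> prob_simplex S"
  unfolding prob_simplex_def ev_def by auto

lemma tq_ev: "s \<in> {1..S} \<Longrightarrow> tq (ev s) = tau s"
proof -
  assume s: "s \<in> {1..S}"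
  have "(\<Sum>r=1..S. (if r = s then 1 else 0) * tau r x) = (\<Sum>r=1..S. (if r = s then tau s x else 0))" for x
    by (rule sum.cong) auto
  then show ?thesis unfolding tq_def ev_def using s by (simp add: fun_eq_iff)
qed

lemma value_formula:
  assumes Q: "Q \<in> multisite_set QX S tau" and q: "q \<in> prob_simplex S"
    and c: "is_cate Q QX (tq q)" and f: "f \<in> F"
  shows "risk Q f - (INF f'\<in>F. risk Q f') = (\<integral>x. (f x - tq q x)\<^sup>2 \<partial>QX)"
proof -
  have sQ: "sets Q = sets (borel \<Otimes>\<^sub>M (borel \<Otimes>\<^sub>M QX))" and P: "prob_space Q"
    and d: "distr Q QX (\<lambda>w. snd (snd w)) = QX"
    and Y2: "integrable Q (\<lambda>w. (fst w - fst (snd w))\<^sup>2)"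
    using Q unfolding multisite_set_def by auto
  define K where "K = (\<integral>w. (fst w - fst (snd w))\<^sup>2 \<partial>Q) - (\<integral>x. (tq q x)\<^sup>2 \<partial>QX)"
  have R: "risk Q f' = K + (\<integral>x. (f' x - tq q x)\<^sup>2 \<partial>QX)" if "f' \<in> F" for f'
    unfolding K_def using risk_formula[OF sQ P d Y2 c tq_L2, of f'] that FL2 by auto
  have "(INF f'\<in>F. risk Q f') = K"
  proof (rule cInf_eq_minimum)
    show "K \<in> risk Q ` F" using R[OF tq_F[OF q]] tq_F[OF q] by force
    fix y assume "y \<in> risk Q ` F"
    then obtain f' where "f' \<in> F" "y = risk Q f'" by auto
    then show "K \<le> y" using R[of f'] by (simp add: integral_nonneg)
  qed
  then show ?thesis using R[OF f] by simp
qed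

definition vQ :: "('x \<Rightarrow> real) \<Rightarrow> (real \<times> real \<times> 'x) measure" where
  "vQ g = distr QX (borel \<Otimes>\<^sub>M (borel \<Otimes>\<^sub>M QX)) (\<lambda>x. (g x, 0, x))"

lemma vQ_props:
  assumes s: "s \<in> {1..S}"
  shows "vQ (tau s) \<in> multisite_set QX S tau" "is_cate (vQ (tau s)) QX (tq (ev s))"
proof -
  interpret prob_space QX by (rule QX)
  have gL: "in_L2 QX (tau s)" by (rule tau_L2[OF s])
  have gm[measurable]: "tau s \<in> borel_measurable QX" using gL unfolding in_L2_def by simp
  have m: "(\<lambda>x. (tau s x, 0::real, x)) \<in> measurable QX (borel \<Otimes>\<^sub>M (borel \<Otimes>\<^sub>M QX))" by measurable
  have Ym: "(\<lambda>w::real\<times>real\<times>'x. fst w - fst (snd w)) \<in> borel_measurable (borel \<Otimes>\<^sub>M (borel \<Otimes>\<^sub>M QX))" by measurable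
  have Y2m: "(\<lambda>w::real\<times>real\<times>'x. (fst w - fst (snd w))\<^sup>2) \<in> borel_measurable (borel \<Otimes>\<^sub>M (borel \<Otimes>\<^sub>M QX))" by measurable
  have sets: "sets (vQ (tau s)) = sets (borel \<Otimes>\<^sub>M (borel \<Otimes>\<^sub>M QX))" unfolding vQ_def by simp
  have P: "prob_space (vQ (tau s))" unfolding vQ_def by (rule prob_space_distr[OF m])
  have Xm: "(\<lambda>w::real\<times>real\<times>'x. snd (snd w)) \<in> measurable (borel \<Otimes>\<^sub>M (borel \<Otimes>\<^sub>M QX)) QX" by measurable
  have d: "distr (vQ (tau s)) QX (\<lambda>w. snd (snd w)) = QX"
    unfolding vQ_def using distr_distr[OF Xm m] by (simp add: comp_def)
  have Y2: "integrable (vQ (tau s)) (\<lambda>w. (fst w - fst (snd w))\<^sup>2)"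
    unfolding vQ_def using integrable_distr_eq[OF m Y2m] gL unfolding in_L2_def by simp
  have Yi: "integrable (vQ (tau s)) (\<lambda>w. fst w - fst (snd w))"
    unfolding vQ_def using integrable_distr_eq[OF m Ym] L2_integrable[OF fin_meas gL] by simp
  have c: "is_cate (vQ (tau s)) QX (tq (ev s))"
    unfolding is_cate_def tq_ev[OF s]
  proof (intro conjI ballI)
    show "tau s \<in> borel_measurable QX" by (rule gm)
    show "integrable QX (tau s)" by (rule L2_integrable[OF fin_meas gL])
    show "integrable (vQ (tau s)) (\<lambda>w. fst w - fst (snd w))" by (rule Yi)
    fix A assume A[measurable]: "A \<in> sets QX"
    have "(\<lambda>w::real\<times>real\<times>'x. indicator A (snd (snd w)) * (fst w - fst (snd w))) \<in> borel_measurable (borel \<Otimes>\<^sub>M (borel \<Otimes>\<^sub>M QX))"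
      by measurable
    then show "(\<integral>w. indicator A (snd (snd w)) * (fst w - fst (snd w)) \<partial>vQ (tau s)) = (\<integral>x. indicator A x * tau s x \<partial>QX)"
      unfolding vQ_def by (subst integral_distr[OF m]) simp_all
  qed
  show "is_cate (vQ (tau s)) QX (tq (ev s))" by (rule c)
  show "vQ (tau s) \<in> multisite_set QX S tau"
    unfolding multisite_set_def using sets P d Y2 c ev_simplex[OF s] unfolding tq_def by blast
qed

end


context msetting
begin

definition Dd :: "('x \<Rightarrow> real) \<Rightarrow> nat \<Rightarrow> real" where
  "Dd f s = (\<integral>x. (f x - tau s x)\<^sup>2 \<partial>QX)"
definition Nn :: "('x \<Rightarrow> real) \<Rightarrow> (nat \<Rightarrow> real) \<Rightarrow> real" where
  "Nn f q = (\<integral>x. (f x - tq q x)\<^sup>2 \<partial>QX)"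
definition wfun :: "(nat \<Rightarrow> real) \<Rightarrow> 'x \<Rightarrow> real" where
  "wfun q x = (\<Sum>r=1..S. q r * (tau r x - tq q x)\<^sup>2)"
definition W :: "(nat \<Rightarrow> real) \<Rightarrow> real" where
  "W q = (\<integral>x. wfun q x \<partial>QX)"

lemma sqdiff_int: "in_L2 QX f \<Longrightarrow> in_L2 QX g \<Longrightarrow> integrable QX (\<lambda>x. (f x - g x)\<^sup>2)"
  using L2_diff L2_sq_integrable by blast

lemma taudiff_int: "s \<in> {1..S} \<Longrightarrow> in_L2 QX f \<Longrightarrow> integrable QX (\<lambda>x. c * (f x - tau s x)\<^sup>2)"
  by (intro integrable_mult_right sqdiff_int tau_L2)

lemma wfun_int: "integrable QX (wfun q)"
proof -
  have "integrable QX (\<lambda>x. \<Sum>r=1..S. q r * (tau r x - tq q x)\<^sup>2)"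
    by (rule Bochner_Integration.integrable_sum) (use sqdiff_int[OF tau_L2 tq_L2] in auto)
  then show ?thesis unfolding wfun_def[abs_def] .
qed

lemma int_sum_Dd:
  assumes f: "in_L2 QX f"
  shows "(\<Sum>s=1..S. q s * Dd f s) = (\<integral>x. (\<Sum>s=1..S. q s * (f x - tau s x)\<^sup>2) \<partial>QX)"
proof -
  have "(\<integral>x. (\<Sum>s=1..S. q s * (f x - tau s x)\<^sup>2) \<partial>QX) = (\<Sum>s=1..S. (\<integral>x. q s * (f x - tau s x)\<^sup>2 \<partial>QX))"
    by (rule Bochner_Integration.integral_sum) (use taudiff_int[OF _ f] in auto)
  also have "\<dots> = (\<Sum>s=1..S. q s * Dd f s)" unfolding Dd_def by simp
  finally show ?thesis by simp
qed

lemma BVi: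
  assumes f: "in_L2 QX f" and q: "q \<in> prob_simplex S"
  shows "(\<Sum>s=1..S. q s * Dd f s) = Nn f q + W q"
proof -
  have s1: "(\<Sum>s=1..S. q s) = 1" using q unfolding prob_simplex_def by simp
  have "(\<Sum>s=1..S. q s * Dd f s) = (\<integral>x. (\<Sum>s=1..S. q s * (f x - tau s x)\<^sup>2) \<partial>QX)"
    by (rule int_sum_Dd[OF f])
  also have "\<dots> = (\<integral>x. (f x - tq q x)\<^sup>2 + wfun q x \<partial>QX)"
    unfolding wfun_def tq_def by (rule Bochner_Integration.integral_cong[OF refl]) (rule pw_BV[OF s1])
  also have "\<dots> = Nn f q + W q"
    unfolding Nn_def W_def using sqdiff_int[OF f tq_L2] wfun_int by simp
  finally show ?thesis .
qed

lemma W_nonneg: "q \<in> prob_simplex S \<Longrightarrow> 0 \<le> W q"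
  unfolding W_def wfun_def prob_simplex_def
  by (rule Bochner_Integration.integral_nonneg) (auto intro!: sum_nonneg)

lemma Dd_nonneg: "0 \<le> Dd f s"
  unfolding Dd_def by (rule Bochner_Integration.integral_nonneg) auto

lemma Nn_nonneg: "0 \<le> Nn f q"
  unfolding Nn_def by (rule Bochner_Integration.integral_nonneg) auto

lemma prod_int: "k \<in> {1..S} \<Longrightarrow> l \<in> {1..S} \<Longrightarrow> integrable QX (\<lambda>x. tau k x * tau l x)"
  using L2_prod_integrable[OF tau_L2 tau_L2] by blast

lemma quadW:
  assumes q: "q \<in> prob_simplex S"
  shows "quad_obj QX S tau q = - W q"
proof -
  have s1: "(\<Sum>s=1..S. q s) = 1" using q unfolding prob_simplex_def by simp
  have i1: "integrable QX (\<lambda>x. \<Sum>r=1..S. q r * (tau r x * tau r x))"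
    by (rule Bochner_Integration.integrable_sum) (use prod_int in auto)
  have i2: "integrable QX (\<lambda>x. \<Sum>k=1..S. \<Sum>l=1..S. q k * (tau k x * tau l x) * q l)"
    by (intro Bochner_Integration.integrable_sum integrable_mult_left integrable_mult_right) (use prod_int in auto)
  have e1: "(\<integral>x. (\<Sum>r=1..S. q r * (tau r x * tau r x)) \<partial>QX) = (\<Sum>r=1..S. q r * Gamma QX tau r r)"
    unfolding Gamma_def
    by (subst Bochner_Integration.integral_sum) (use prod_int in auto)
  have e2: "(\<integral>x. (\<Sum>k=1..S. \<Sum>l=1..S. q k * (tau k x * tau l x) * q l) \<partial>QX)
      = (\<Sum>k=1..S. \<Sum>l=1..S. q k * Gamma QX tau k l * q l)"
    unfolding Gamma_def
    apply (subst Bochner_Integration.integral_sum)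
     apply (intro Bochner_Integration.integrable_sum integrable_mult_left integrable_mult_right) apply (use prod_int in auto)[1]
    apply (rule sum.cong[OF refl])
    apply (subst Bochner_Integration.integral_sum)
     apply (intro Bochner_Integration.integrable_sum integrable_mult_left integrable_mult_right) apply (use prod_int in auto)[1]
    by simp
  have "W q = (\<integral>x. (\<Sum>r=1..S. q r * (tau r x * tau r x)) - (\<Sum>k=1..S. \<Sum>l=1..S. q k * (tau k x * tau l x) * q l) \<partial>QX)"
    unfolding W_def wfun_def tq_def
    apply (rule Bochner_Integration.integral_cong[OF refl])
    unfolding pw_W[OF s1] pw_sq by (simp add: power2_eq_square)
  also have "\<dots> = (\<Sum>r=1..S. q r * Gamma QX tau r r) - (\<Sum>k=1..S. \<Sum>l=1..S. q k * Gamma QX tau k l * q l)"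
    using i1 i2 e1 e2 by simp
  finally show ?thesis unfolding quad_obj_def by simp
qed

end


context msetting
begin

definition qt :: "(nat \<Rightarrow> real) \<Rightarrow> nat \<Rightarrow> real \<Rightarrow> nat \<Rightarrow> real" where
  "qt q s t = (\<lambda>r. (1 - t) * q r + t * (if r = s then 1 else 0))"

lemma qt_simplex:
  assumes q: "q \<in> prob_simplex S" and s: "s \<in> {1..S}" and t: "0 \<le> t" "t \<le> 1"
  shows "qt q s t \<in> prob_simplex S"
proof -
  have s1: "(\<Sum>s=1..S. q s) = 1" and nn: "\<forall>r\<in>{1..S}. 0 \<le> q r" using q unfolding prob_simplex_def by auto
  have "(\<Sum>r=1..S. qt q s t r) = 1"
    using pw_lin[of "{1..S}" s t q "\<lambda>_. 1"] s s1 unfolding qt_def by simp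
  moreover have "\<forall>r\<in>{1..S}. 0 \<le> qt q s t r" using nn t unfolding qt_def by auto
  ultimately show ?thesis unfolding prob_simplex_def by simp
qed

lemma Wt:
  assumes q: "q \<in> prob_simplex S" and s: "s \<in> {1..S}"
  shows "W (qt q s t) = W q + t * (Dd (tq q) s - W q) - t\<^sup>2 * Dd (tq q) s"
proof -
  have s1: "(\<Sum>s=1..S. q s) = 1" using q unfolding prob_simplex_def by auto
  have ai: "integrable QX (\<lambda>x. (tau s x - tq q x)\<^sup>2)" by (rule sqdiff_int[OF tau_L2[OF s] tq_L2])
  have Dd': "Dd (tq q) s = (\<integral>x. (tau s x - tq q x)\<^sup>2 \<partial>QX)"
    unfolding Dd_def by (simp add: power2_commute)
  have "W (qt q s t) = (\<integral>x. wfun q x + t * ((tau s x - tq q x)\<^sup>2 - wfun q x) - t\<^sup>2 * (tau s x - tq q x)\<^sup>2 \<partial>QX)"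
    unfolding W_def
    apply (rule Bochner_Integration.integral_cong[OF refl])
    subgoal for x
      unfolding wfun_def tq_def qt_def
      by (rule pw_Wt[where I="{1..S}" and s=s and q=q and v="\<lambda>r. tau r x" and t=t, OF finite_atLeastAtMost s s1])
    done
  also have "\<dots> = W q + t * (Dd (tq q) s - W q) - t\<^sup>2 * Dd (tq q) s"
    unfolding Dd' W_def using ai wfun_int by (simp add: algebra_simps)
  finally show ?thesis .
qed

lemma opt:
  assumes qs: "qstar \<in> prob_simplex S"
    and mn: "\<forall>q\<in>prob_simplex S. quad_obj QX S tau qstar \<le> quad_obj QX S tau q"
    and s: "s \<in> {1..S}"
  shows "Dd (tq qstar) s \<le> W qstar"
proof (rule ccontr)
  define A where "A = Dd (tq qstar) s"
  define B where "B = W qstar"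
  assume "\<not> Dd (tq qstar) s \<le> W qstar"
  then have AB: "B < A" unfolding A_def B_def by simp
  have B0: "0 \<le> B" unfolding B_def by (rule W_nonneg[OF qs])
  then have A0: "0 < A" using AB by simp
  define t where "t = (A - B) / (2 * A)"
  have t0: "0 < t" unfolding t_def using AB A0 by simp
  have t0': "0 \<le> t" using t0 by simp
  have t1: "t \<le> 1" unfolding t_def using AB A0 B0 by (simp add: field_simps)
  have tA: "t * A = (A - B) / 2" unfolding t_def using A0 by (simp add: field_simps)
  have "quad_obj QX S tau qstar \<le> quad_obj QX S tau (qt qstar s t)"
    using mn qt_simplex[OF qs s t0' t1] t0 by simp
  then have le: "W (qt qstar s t) \<le> B"
    unfolding B_def quadW[OF qs] quadW[OF qt_simplex[OF qs s t0' t1]] using t0 by simp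
  have "W (qt qstar s t) = B + t * (A - B) - t * (t * A)"
    unfolding A_def B_def Wt[OF qs s] by (simp add: power2_eq_square)
  also have "\<dots> = B + t * ((A - B) / 2)" unfolding tA by (simp add: algebra_simps)
  finally have "W (qt qstar s t) > B" using t0 AB by simp
  then show False using le by simp
qed

end


context msetting
begin

lemma M_value:
  assumes Q: "Q \<in> multisite_set QX S tau" and f: "f \<in> F"
  obtains q where "q \<in> prob_simplex S" "risk Q f - (INF f'\<in>F. risk Q f') = Nn f q"
proof -
  obtain q where q: "q \<in> prob_simplex S" and c: "is_cate Q QX (tq q)"
    using Q unfolding multisite_set_def tq_def by auto
  show ?thesis using that[OF q] value_formula[OF Q q c f] unfolding Nn_def by simp
qed

lemma Nn_le_sum:
  assumes f: "in_L2 QX f" and q: "q \<in> prob_simplex S"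
  shows "Nn f q \<le> (\<Sum>s=1..S. q s * Dd f s)"
  using BVi[OF f q] W_nonneg[OF q] by simp

lemma S_pos: "qstar \<in> prob_simplex S \<Longrightarrow> 1 \<le> S"
  unfolding prob_simplex_def by (cases S) auto

lemma bdd:
  assumes f: "f \<in> F"
  shows "bdd_above ((\<lambda>Q. risk Q f - (INF f'\<in>F. risk Q f')) ` multisite_set QX S tau)"
proof (rule bdd_aboveI)
  fix y assume "y \<in> (\<lambda>Q. risk Q f - (INF f'\<in>F. risk Q f')) ` multisite_set QX S tau"
  then obtain Q where Q: "Q \<in> multisite_set QX S tau" and y: "y = risk Q f - (INF f'\<in>F. risk Q f')" by auto
  obtain q where q: "q \<in> prob_simplex S" and v: "y = Nn f q" using M_value[OF Q f] y by metis
  have fL: "in_L2 QX f" using f FL2 by auto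
  have "(\<Sum>s=1..S. q s * Dd f s) \<le> (\<Sum>s=1..S. Dd f s)"
  proof (rule sum_mono)
    fix s assume s: "s \<in> {1..S}"
    have "q s \<le> (\<Sum>r=1..S. q r)"
      by (rule member_le_sum) (use q s in \<open>auto simp: prob_simplex_def\<close>)
    then have "q s \<le> 1" using q unfolding prob_simplex_def by simp
    then show "q s * Dd f s \<le> Dd f s" using Dd_nonneg[of f s] q s unfolding prob_simplex_def
      by (simp add: mult_left_le_one_le)
  qed
  then show "y \<le> (\<Sum>s=1..S. Dd f s)" using Nn_le_sum[OF fL q] v by simp
qed

lemma regret_lower:
  assumes f: "f \<in> F" and s: "s \<in> {1..S}"
  shows "Dd f s \<le> regret QX S tau F f"
proof -
  have "risk (vQ (tau s)) f - (INF f'\<in>F. risk (vQ (tau s)) f') = Nn f (ev s)"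
    using value_formula[OF vQ_props(1)[OF s] ev_simplex[OF s] vQ_props(2)[OF s] f] unfolding Nn_def by simp
  also have "\<dots> = Dd f s" unfolding Nn_def Dd_def tq_ev[OF s] ..
  finally have e: "risk (vQ (tau s)) f - (INF f'\<in>F. risk (vQ (tau s)) f') = Dd f s" .
  show ?thesis unfolding regret_def e[symmetric]
    by (rule cSUP_upper[OF vQ_props(1)[OF s] bdd[OF f]])
qed

lemma main:
  assumes qs: "qstar \<in> prob_simplex S"
    and mn: "\<forall>q\<in>prob_simplex S. quad_obj QX S tau qstar \<le> quad_obj QX S tau q"
    and f: "f \<in> F"
  shows "regret QX S tau F (tq qstar) + Nn f qstar \<le> regret QX S tau F f"
proof -
  have S1: "1 \<le> S" by (rule S_pos[OF qs])
  have fs: "tq qstar \<in> F" by (rule tq_F[OF qs])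
  have fL: "in_L2 QX f" using f FL2 by auto
  have up: "regret QX S tau F (tq qstar) \<le> W qstar"
    unfolding regret_def
  proof (rule cSUP_least)
    show "multisite_set QX S tau \<noteq> {}" using vQ_props(1)[of 1] S1 by auto
    fix Q assume Q: "Q \<in> multisite_set QX S tau"
    obtain q where q: "q \<in> prob_simplex S" and v: "risk Q (tq qstar) - (INF f'\<in>F. risk Q f') = Nn (tq qstar) q"
      using M_value[OF Q fs] by metis
    have "Nn (tq qstar) q \<le> (\<Sum>s=1..S. q s * Dd (tq qstar) s)" by (rule Nn_le_sum[OF tq_L2 q])
    also have "\<dots> \<le> (\<Sum>s=1..S. q s * W qstar)"
      by (rule sum_mono, rule mult_left_mono) (use opt[OF qs mn] q in \<open>auto simp: prob_simplex_def\<close>)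
    also have "\<dots> = W qstar" using q unfolding prob_simplex_def by (simp add: sum_distrib_right[symmetric])
    finally show "risk Q (tq qstar) - (INF f'\<in>F. risk Q f') \<le> W qstar" using v by simp
  qed
  have "W qstar + Nn f qstar = (\<Sum>s=1..S. qstar s * Dd f s)" using BVi[OF fL qs] by simp
  also have "\<dots> \<le> (\<Sum>s=1..S. qstar s * regret QX S tau F f)"
    by (rule sum_mono, rule mult_left_mono) (use regret_lower[OF f] qs in \<open>auto simp: prob_simplex_def\<close>)
  also have "\<dots> = regret QX S tau F f" using qs unfolding prob_simplex_def by (simp add: sum_distrib_right[symmetric])
  finally show ?thesis using up by simp
qed

end

theorem theorem1:
  fixes QX :: "'x measure" and S :: nat and tau :: "nat \<Rightarrow> 'x \<Rightarrow> real"
    and F :: "('x \<Rightarrow> real) set" and qstar :: "nat \<Rightarrow> real"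
  assumes "prob_space QX"
    and "\<forall>f\<in>F. in_L2 QX f"
    and "convex_fset F"
    and "\<forall>s\<in>{1..S}. tau s \<in> F"
    and "qstar \<in> prob_simplex S"
    and "\<forall>q\<in>prob_simplex S. quad_obj QX S tau qstar \<le> quad_obj QX S tau q"
  shows "(\<lambda>x. \<Sum>s=1..S. qstar s * tau s x) \<in> F
    \<and> (\<forall>f\<in>F. regret QX S tau F (\<lambda>x. \<Sum>s=1..S. qstar s * tau s x) \<le> regret QX S tau F f)
    \<and> (\<forall>f\<in>F. (\<forall>g\<in>F. regret QX S tau F f \<le> regret QX S tau F g)
          \<longrightarrow> (AE x in QX. f x = (\<Sum>s=1..S. qstar s * tau s x)))"
proof -
  interpret msetting QX S tau F using assms(1-4) by (rule msetting.intro)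
  have e: "(\<lambda>x. \<Sum>s=1..S. qstar s * tau s x) = tq qstar" unfolding tq_def ..
  have A: "tq qstar \<in> F" by (rule tq_F[OF assms(5)])
  have B: "\<forall>f\<in>F. regret QX S tau F (tq qstar) \<le> regret QX S tau F f"
    using main[OF assms(5,6)] Nn_nonneg by (meson add_increasing2 order_trans le_add_same_cancel1)
  have C: "AE x in QX. f x = (\<Sum>s=1..S. qstar s * tau s x)" if f: "f \<in> F" and opt: "\<forall>g\<in>F. regret QX S tau F f \<le> regret QX S tau F g" for f
  proof -
    have "regret QX S tau F f \<le> regret QX S tau F (tq qstar)" using opt A by blast
    then have "Nn f qstar \<le> 0" using main[OF assms(5,6) f] by simp
    then have N0: "Nn f qstar = 0" using Nn_nonneg[of f qstar] by simp
    have fL: "in_L2 QX f" using f assms(2) by auto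
    have "AE x in QX. (f x - tq qstar x)\<^sup>2 = 0"
      using N0 integral_nonneg_eq_0_iff_AE[OF sqdiff_int[OF fL tq_L2]] unfolding Nn_def by simp
    then show ?thesis by (auto simp: tq_def)
  qed
  show ?thesis unfolding e using A B C by blast
qed


end
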